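(* Let $k>0$ be an integer (in canonical form) and let $G\cong\{a\mid b\}$ where $a$, $b$, $G$ are numbers. If $b-G\le 1$ and, for $i=1,\dots,k$, $\alpha_i>0$ is the least integer such that $2^{-\alpha_i}<b-G-\sum_{j=1}^{i-1}2^{-\alpha_j}$, then \[G\mathbin{:}k=G+\sum_{i=1}^k\frac{1}{2^{\alpha_i}}.\] Similarly, if $G-a\le 1$ and, for $i=1,\dots,k$, $\beta_i$ is the least integer such that $2^{-\beta_i}<G-a-\sum_{j=1}^{i-1}2^{-\beta_j}$, then \[G\mathbin{:}(-k)=G-\sum_{i=1}^k\frac{1}{2^{\beta_i}}.\]
   Context: Games are short normal-play combinatorial games, written $\{L\mid R\}$; a number is a game with $G^L<G<G^R$ for all options, with values identified with dyadic rationals. Canonical integers: $n\cong\{n-1\mid\}$ for $n>0$, $n\cong\{\mid n+1\}$ for $n<0$, $0\cong\{\mid\}$. The ordinal sum is $G\mathbin{:}H\cong\{L(G),\,G\mathbin{:}L(H)\mid R(G),\,G\mathbin{:}R(H)\}$. *)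

theory Defs
  imports Complex_Main
begin

datatype game = Game "game list" "game list"

lemma size_mem_list_less: "x \<in> set xs \<Longrightarrow> size x \<le> size_list size xs"
  by (induction xs) auto

function game_le :: "game \<Rightarrow> game \<Rightarrow> bool" where
  "game_le (Game GL GR) (Game HL HR) \<longleftrightarrow>
     (\<forall>x\<in>set GL. \<not> game_le (Game HL HR) x) \<and> (\<forall>y\<in>set HR. \<not> game_le y (Game GL GR))"
  by pat_completeness auto
termination
  by (relation "measure (\<lambda>(g,h). size g + size h)")
     (auto dest: size_mem_list_less)

definition game_lt :: "game \<Rightarrow> game \<Rightarrow> bool" where
  "game_lt G H \<longleftrightarrow> game_le G H \<and> \<not> game_le H G"

definition game_eq :: "game \<Rightarrow> game \<Rightarrow> bool" where
  "game_eq G H \<longleftrightarrow> game_le G H \<and> game_le H G"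

fun is_number :: "game \<Rightarrow> bool" where
  "is_number (Game GL GR) \<longleftrightarrow>
     (\<forall>x\<in>set GL. is_number x) \<and> (\<forall>y\<in>set GR. is_number y) \<and>
     (\<forall>x\<in>set GL. game_lt x (Game GL GR)) \<and> (\<forall>y\<in>set GR. game_lt (Game GL GR) y)"

fun pos_game :: "nat \<Rightarrow> game" where
  "pos_game 0 = Game [] []"
| "pos_game (Suc n) = Game [pos_game n] []"

fun neg_game :: "nat \<Rightarrow> game" where
  "neg_game 0 = Game [] []"
| "neg_game (Suc n) = Game [] [neg_game n]"

definition int_game :: "int \<Rightarrow> game" where
  "int_game z = (if z \<ge> 0 then pos_game (nat z) else neg_game (nat (- z)))"

text \<open>Canonical dyadic rationals: dyad m n is the canonical form of m/2^n.\<close>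

fun dyad :: "int \<Rightarrow> nat \<Rightarrow> game" where
  "dyad m 0 = int_game m"
| "dyad m (Suc n) = (if even m then dyad (m div 2) n
                     else Game [dyad ((m - 1) div 2) n] [dyad ((m + 1) div 2) n])"

definition has_value :: "game \<Rightarrow> real \<Rightarrow> bool" where
  "has_value G x \<longleftrightarrow> (\<exists>m n. x = of_int m / 2 ^ n \<and> game_eq G (dyad m n))"

fun ordsum :: "game \<Rightarrow> game \<Rightarrow> game" where
  "ordsum G (Game HL HR) =
     (case G of Game GL GR \<Rightarrow> Game (GL @ map (ordsum G) HL) (GR @ map (ordsum G) HR))"

end

theory Submission imports Defs begin

fun lopts :: "game \<Rightarrow> game list" where "lopts (Game L R) = L"
fun ropts :: "game \<Rightarrow> game list" where "ropts (Game L R) = R"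

lemma game_le_iff: "game_le G H \<longleftrightarrow> (\<forall>x\<in>set (lopts G). \<not> game_le H x) \<and> (\<forall>y\<in>set (ropts H). \<not> game_le y G)"
  by (cases G; cases H) simp

lemma size_lopts: "x \<in> set (lopts G) \<Longrightarrow> size x < size G"
  by (cases G) (auto dest: size_mem_list_less)
lemma size_ropts: "x \<in> set (ropts G) \<Longrightarrow> size x < size G"
  by (cases G) (auto dest: size_mem_list_less)

lemma game_le_refl: "game_le x x"
proof (induction x)
  case (Game L R)
  show ?case
  proof (subst game_le_iff, intro conjI ballI)
    fix y assume y: "y \<in> set (lopts (Game L R))"
    have "game_le y y" using Game.IH(1) y by simp
    then show "\<not> game_le (Game L R) y" using y by (subst game_le_iff) auto
  next
    fix y assume y: "y \<in> set (ropts (Game L R))"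
    have "game_le y y" using Game.IH(2) y by simp
    then show "\<not> game_le y (Game L R)" using y by (subst game_le_iff) auto
  qed
qed

lemma not_le_lopt: "x \<in> set (lopts G) \<Longrightarrow> \<not> game_le G x"
  using game_le_refl[of G] by (subst (asm) game_le_iff) auto
lemma not_le_ropt: "x \<in> set (ropts G) \<Longrightarrow> \<not> game_le x G"
  using game_le_refl[of G] by (subst (asm) game_le_iff) auto

lemma game_le_trans_aux:
  "size x + size y + size z = n \<Longrightarrow> game_le x y \<Longrightarrow> game_le y z \<Longrightarrow> game_le x z"
proof (induction n arbitrary: x y z rule: less_induct)
  case (less n)
  show ?case
  proof (subst game_le_iff, intro conjI ballI)
    fix w assume w: "w \<in> set (lopts x)"
    show "\<not> game_le z w"
    proof
      assume zw: "game_le z w"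
      have "game_le y w" using less.IH[OF _ refl less.prems(3) zw] less.prems(1) size_lopts[OF w] by simp
      moreover have "\<not> game_le y w" using less.prems(2) w by (subst (asm) game_le_iff) auto
      ultimately show False by simp
    qed
  next
    fix w assume w: "w \<in> set (ropts z)"
    show "\<not> game_le w x"
    proof
      assume wx: "game_le w x"
      have "game_le w y" using less.IH[OF _ refl wx less.prems(2)] less.prems(1) size_ropts[OF w] by simp
      moreover have "\<not> game_le w y" using less.prems(3) w by (subst (asm) game_le_iff) auto
      ultimately show False by simp
    qed
  qed
qed

lemma game_le_trans: "game_le x y \<Longrightarrow> game_le y z \<Longrightarrow> game_le x z"
  using game_le_trans_aux by blast

definition dy :: "nat \<Rightarrow> real \<Rightarrow> bool" where "dy e x \<longleftrightarrow> x * 2 ^ e \<in> \<int>"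

lemma dy_mono: "dy e x \<Longrightarrow> e \<le> e' \<Longrightarrow> dy e' x"
proof -
  assume "dy e x" "e \<le> e'"
  then obtain m where m: "x * 2 ^ e = of_int m" unfolding dy_def by (auto elim: Ints_cases)
  have "x * 2 ^ e' = x * 2 ^ e * 2 ^ (e' - e)" using \<open>e \<le> e'\<close> by (simp add: power_add[symmetric])
  also have "\<dots> = of_int (m * 2 ^ (e' - e))" using m by simp
  finally show ?thesis unfolding dy_def by simp
qed

lemma dy_gap: "dy e z \<Longrightarrow> dy e w \<Longrightarrow> z < w \<Longrightarrow> w < z + 1 / 2 ^ e \<Longrightarrow> False"
proof -
  assume a: "dy e z" "dy e w" "z < w" "w < z + 1 / 2 ^ e"
  obtain m where m: "z * 2 ^ e = of_int m" using a(1) unfolding dy_def by (auto elim: Ints_cases)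
  obtain n where n: "w * 2 ^ e = of_int n" using a(2) unfolding dy_def by (auto elim: Ints_cases)
  have p: "(0::real) < 2 ^ e" by simp
  have "z * 2 ^ e < w * 2 ^ e" using a(3) p by simp
  hence "m < n" using m n by simp
  have "w * 2 ^ e < (z + 1 / 2 ^ e) * 2 ^ e" using a(4) p by (simp only: mult_strict_right_mono)
  hence "w * 2 ^ e < z * 2 ^ e + 1" using p by (simp add: distrib_right)
  hence "n < m + 1" using m n by simp
  with \<open>m < n\<close> show False by simp
qed

inductive canon :: "game \<Rightarrow> real \<Rightarrow> nat \<Rightarrow> bool" where
  "\<lbrakk> dy e x; e > 0 \<longrightarrow> \<not> dy (e - 1) x;
     (e = 0 \<and> x \<le> 0 \<and> L = []) \<or> (\<not> (e = 0 \<and> x \<le> 0) \<and> (\<exists>XL f. L = [XL] \<and> canon XL (x - 1 / 2 ^ e) f));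
     (e = 0 \<and> x \<ge> 0 \<and> R = []) \<or> (\<not> (e = 0 \<and> x \<ge> 0) \<and> (\<exists>XR f. R = [XR] \<and> canon XR (x + 1 / 2 ^ e) f)) \<rbrakk>
   \<Longrightarrow> canon (Game L R) x e"


lemma canon_E: "canon X x e \<Longrightarrow> dy e x \<and> (e > 0 \<longrightarrow> \<not> dy (e - 1) x) \<and>
   ((e = 0 \<and> x \<le> 0 \<and> lopts X = []) \<or> (\<not> (e = 0 \<and> x \<le> 0) \<and> (\<exists>XL f. lopts X = [XL] \<and> canon XL (x - 1 / 2 ^ e) f))) \<and>
   ((e = 0 \<and> x \<ge> 0 \<and> ropts X = []) \<or> (\<not> (e = 0 \<and> x \<ge> 0) \<and> (\<exists>XR f. ropts X = [XR] \<and> canon XR (x + 1 / 2 ^ e) f)))"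
  by (cases rule: canon.cases) auto

lemma canon_lopt: "canon X x e \<Longrightarrow> XL \<in> set (lopts X) \<Longrightarrow> \<not> (e = 0 \<and> x \<le> 0) \<and> (\<exists>f. canon XL (x - 1 / 2 ^ e) f)"
  by (drule canon_E) auto
lemma canon_ropt: "canon X x e \<Longrightarrow> XR \<in> set (ropts X) \<Longrightarrow> \<not> (e = 0 \<and> x \<ge> 0) \<and> (\<exists>f. canon XR (x + 1 / 2 ^ e) f)"
  by (drule canon_E) auto
lemma canon_has_lopt: "canon X x e \<Longrightarrow> \<not> (e = 0 \<and> x \<le> 0) \<Longrightarrow> \<exists>XL f. lopts X = [XL] \<and> canon XL (x - 1 / 2 ^ e) f"
  by (drule canon_E) auto
lemma canon_has_ropt: "canon X x e \<Longrightarrow> \<not> (e = 0 \<and> x \<ge> 0) \<Longrightarrow> \<exists>XR f. ropts X = [XR] \<and> canon XR (x + 1 / 2 ^ e) f"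
  by (drule canon_E) auto
lemma canon_dy: "canon X x e \<Longrightarrow> dy e x"
  by (drule canon_E) auto
lemma canon_min: "canon X x e \<Longrightarrow> dy d x \<Longrightarrow> e \<le> d"
proof (rule ccontr)
  assume a: "canon X x e" "dy d x" "\<not> e \<le> d"
  hence "dy (e - 1) x" using dy_mono[OF a(2)] by simp
  with canon_E[OF a(1)] a(3) show False by simp
qed

lemma dy_shift: assumes "dy e x" "c \<in> \<int>" shows "dy e (x + c / 2 ^ e)"
proof -
  obtain m where m: "x * 2 ^ e = of_int m" using assms(1) unfolding dy_def by (auto elim: Ints_cases)
  obtain n where n: "c = of_int n" using assms(2) by (auto elim: Ints_cases)
  have "(x + c / 2 ^ e) * 2 ^ e = x * 2 ^ e + c" by (simp add: distrib_right)
  also have "\<dots> = of_int (m + n)" using m n by simp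
  finally show ?thesis unfolding dy_def by simp
qed

lemma dy_minus: "dy e x \<Longrightarrow> dy e (x - 1 / 2 ^ e)"
  using dy_shift[where c="-1" and e=e and x=x] by simp
lemma dy_plus: "dy e x \<Longrightarrow> dy e (x + 1 / 2 ^ e)"
  using dy_shift[where c="1" and e=e and x=x] by simp

lemma canon_K:
  assumes X: "canon X x e" and Y: "canon Y y f" and yx: "y < x"
  shows "(\<not> (e = 0 \<and> x \<le> 0) \<and> y \<le> x - 1 / 2 ^ e) \<or> (\<not> (f = 0 \<and> y \<ge> 0) \<and> y + 1 / 2 ^ f \<le> x)"
proof -
  have dx: "dy e x" and dyy: "dy f y" using canon_dy X Y by auto
  have left: "y \<le> x - 1 / 2 ^ e" if "dy e y"
  proof (rule ccontr)
    assume "\<not> y \<le> x - 1 / 2 ^ e"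
    thus False using dy_gap[OF dy_minus[OF dx] that] yx by simp
  qed
  show ?thesis
  proof (cases "f = 0 \<and> y \<ge> 0")
    case True
    hence "\<not> (e = 0 \<and> x \<le> 0)" using yx by auto
    moreover have "dy e y" using dy_mono[OF dyy] True by simp
    ultimately show ?thesis using left by simp
  next
    case False
    show ?thesis
    proof (cases "e \<le> f")
      case True
      have "y + 1 / 2 ^ f \<le> x"
      proof (rule ccontr)
        assume "\<not> y + 1 / 2 ^ f \<le> x"
        thus False using dy_gap[OF dyy dy_mono[OF dx True]] yx by simp
      qed
      thus ?thesis using False by simp
    next
      case c2: False
      hence "\<not> (e = 0 \<and> x \<le> 0)" by simp
      moreover have "dy e y" using dy_mono[OF dyy] c2 by simp
      ultimately show ?thesis using left by simp
    qed
  qed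
qed

lemma canon_le_aux:
  "size X + size Y = n \<Longrightarrow> canon X x e \<Longrightarrow> canon Y y f \<Longrightarrow> game_le X Y \<longleftrightarrow> x \<le> y"
proof (induction n arbitrary: X Y x y e f rule: less_induct)
  case (less n)
  note X = less.prems(2) and Y = less.prems(3)
  have IHL: "game_le Y XL \<longleftrightarrow> y \<le> x - 1 / 2 ^ e" if XLin: "XL \<in> set (lopts X)" for XL
  proof -
    obtain f' where "canon XL (x - 1 / 2 ^ e) f'" using canon_lopt[OF X XLin] by blast
    thus ?thesis using less.IH[OF _ refl Y] size_lopts[OF XLin] less.prems(1) by simp
  qed
  have IHR: "game_le YR X \<longleftrightarrow> y + 1 / 2 ^ f \<le> x" if YRin: "YR \<in> set (ropts Y)" for YR
  proof -
    obtain f' where "canon YR (y + 1 / 2 ^ f) f'" using canon_ropt[OF Y YRin] by blast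
    thus ?thesis using less.IH[OF _ refl _ X] size_ropts[OF YRin] less.prems(1) by simp
  qed
  show ?case
  proof
    assume le: "game_le X Y"
    show "x \<le> y"
    proof (rule ccontr)
      assume "\<not> x \<le> y"
      hence "y < x" by simp
      from canon_K[OF X Y this] show False
      proof
        assume a: "\<not> (e = 0 \<and> x \<le> 0) \<and> y \<le> x - 1 / 2 ^ e"
        then obtain XL where "lopts X = [XL]" using canon_has_lopt[OF X] by blast
        thus False using le a IHL[of XL] by (subst (asm) game_le_iff) auto
      next
        assume a: "\<not> (f = 0 \<and> y \<ge> 0) \<and> y + 1 / 2 ^ f \<le> x"
        then obtain YR where "ropts Y = [YR]" using canon_has_ropt[OF Y] by blast
        thus False using le a IHR[of YR] by (subst (asm) game_le_iff) auto
      qed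
    qed
  next
    assume "x \<le> y"
    have p: "(0::real) < 1 / 2 ^ e" "(0::real) < 1 / 2 ^ f" by auto
    show "game_le X Y"
      using IHL IHR \<open>x \<le> y\<close> p by (subst game_le_iff) force
  qed
qed

lemma canon_le: "canon X x e \<Longrightarrow> canon Y y f \<Longrightarrow> game_le X Y \<longleftrightarrow> x \<le> y"
  using canon_le_aux by blast


lemma dy0_int: "dy 0 (of_int z)" by (simp add: dy_def)

lemma canon_pos: "canon (pos_game n) (of_nat n) 0"
proof (induction n)
  case 0
  show ?case by (simp, rule canon.intros) (auto simp: dy_def)
next
  case (Suc n)
  have "canon (Game [pos_game n] []) (real n + 1) 0"
    by (rule canon.intros) (use Suc in \<open>auto simp: dy_def\<close>)
  thus ?case by (simp add: add.commute)
qed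

lemma canon_neg: "canon (neg_game n) (- of_nat n) 0"
proof (induction n)
  case 0
  show ?case by (simp, rule canon.intros) (auto simp: dy_def)
next
  case (Suc n)
  have "canon (Game [] [neg_game n]) (- 1 - real n) 0"
    by (rule canon.intros) (use Suc in \<open>auto simp: dy_def\<close>)
  thus ?case by (simp add: add.commute)
qed

lemma canon_int: "canon (int_game z) (of_int z) 0"
  using canon_pos[of "nat z"] canon_neg[of "nat (-z)"] by (auto simp: int_game_def)

lemma canon_dyad: "\<exists>e. canon (dyad m n) (of_int m / 2 ^ n) e"
proof (induction m n rule: dyad.induct)
  case (1 m)
  then show ?case using canon_int by auto
next
  case (2 m n)
  show ?case
  proof (cases "even m")
    case True
    then obtain e where e: "canon (dyad (m div 2) n) (of_int (m div 2) / 2 ^ n) e" using 2(1) by blast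
    from True obtain k where k: "m = 2 * k" by blast
    have "of_int (m div 2) / 2 ^ n = (of_int m / 2 ^ Suc n :: real)" using k by simp
    thus ?thesis using e True by auto
  next
    case False
    obtain e1 where e1: "canon (dyad ((m - 1) div 2) n) (of_int ((m - 1) div 2) / 2 ^ n) e1" using 2(2) False by blast
    obtain e2 where e2: "canon (dyad ((m + 1) div 2) n) (of_int ((m + 1) div 2) / 2 ^ n) e2" using 2(3) False by blast
    from False obtain k where k: "m = 2 * k + 1" by (metis oddE)
    have v1: "of_int ((m - 1) div 2) / 2 ^ n = (of_int m / 2 ^ Suc n - 1 / 2 ^ Suc n :: real)"
      using k by (simp add: field_simps)
    have v2: "of_int ((m + 1) div 2) / 2 ^ n = (of_int m / 2 ^ Suc n + 1 / 2 ^ Suc n :: real)"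
      using k by (simp add: field_simps)
    have d1: "dy (Suc n) (of_int m / 2 ^ Suc n)" by (simp add: dy_def)
    have d2: "\<not> dy n (of_int m / 2 ^ Suc n)"
    proof
      assume "dy n (of_int m / 2 ^ Suc n)"
      then obtain j where "of_int m / 2 ^ Suc n * 2 ^ n = (of_int j :: real)" unfolding dy_def by (auto elim: Ints_cases)
      hence "of_int m = (2 * of_int j :: real)" by (simp add: field_simps)
      hence "m = 2 * j" by linarith
      thus False using k by presburger
    qed
    have "canon (Game [dyad ((m - 1) div 2) n] [dyad ((m + 1) div 2) n]) (of_int m / 2 ^ Suc n) (Suc n)"
      by (rule canon.intros) (use d1 d2 e1 e2 v1 v2 in auto)
    thus ?thesis using False by auto
  qed
qed

lemma game_eq_sym: "game_eq x y \<Longrightarrow> game_eq y x" by (auto simp: game_eq_def)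
lemma game_eq_trans: "game_eq x y \<Longrightarrow> game_eq y z \<Longrightarrow> game_eq x z"
  by (auto simp: game_eq_def intro: game_le_trans)

lemma canon_eq: "canon X x e \<Longrightarrow> canon Y x f \<Longrightarrow> game_eq X Y"
  using canon_le by (auto simp: game_eq_def)

lemma has_value_canon: "has_value X x \<Longrightarrow> \<exists>C e. canon C x e \<and> game_eq X C"
  unfolding has_value_def using canon_dyad by blast

lemma canon_has_value: "canon C x e \<Longrightarrow> game_eq X C \<Longrightarrow> has_value X x"
proof -
  assume C: "canon C x e" and eq: "game_eq X C"
  obtain m where m: "x * 2 ^ e = of_int m" using canon_dy[OF C] unfolding dy_def by (auto elim: Ints_cases)
  hence xv: "x = of_int m / 2 ^ e" by (simp add: field_simps)
  obtain f where "canon (dyad m e) (of_int m / 2 ^ e) f" using canon_dyad by blast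
  hence "game_eq C (dyad m e)" using canon_eq[OF C] xv by simp
  hence "game_eq X (dyad m e)" using game_eq_trans eq by blast
  thus ?thesis unfolding has_value_def using xv by blast
qed


lemma canon_unique: "canon X v e \<Longrightarrow> canon X w f \<Longrightarrow> v = w"
  using canon_le[of X v e X w f] canon_le[of X w f X v e] game_le_refl[of X] by simp

lemma dy_odd:
  assumes "dy e c" "e > 0" "\<not> dy (e - 1) c"
  shows "dy (e - 1) (c + 1 / 2 ^ e) \<and> dy (e - 1) (c - 1 / 2 ^ e)"
proof -
  obtain d where ed: "e = Suc d" using assms(2) by (cases e) auto
  obtain m where m: "c * 2 ^ e = of_int m" using assms(1) unfolding dy_def by (auto elim: Ints_cases)
  have m2: "c * 2 ^ d * 2 = of_int m" using m ed by (simp add: mult.commute mult.left_commute)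
  have "odd m"
  proof
    assume "even m"
    then obtain j where "m = 2 * j" by blast
    hence "c * 2 ^ d = of_int j" using m2 by simp
    thus False using assms(3) ed unfolding dy_def by simp
  qed
  then obtain j where j: "m = 2 * j + 1" by (metis oddE)
  have hp: "(1 / 2 ^ e) * 2 ^ d = (1/2::real)" using ed by simp
  have "(c + 1 / 2 ^ e) * 2 ^ d = c * 2 ^ d + 1/2" using hp by (simp add: distrib_right)
  also have "c * 2 ^ d = of_int j + 1/2" using m2 j by simp
  finally have 1: "(c + 1 / 2 ^ e) * 2 ^ d = of_int (j + 1)" by simp
  have "(c - 1 / 2 ^ e) * 2 ^ d = c * 2 ^ d - 1/2" using hp by (simp add: left_diff_distrib)
  also have "c * 2 ^ d = of_int j + 1/2" using m2 j by simp
  finally have 2: "(c - 1 / 2 ^ e) * 2 ^ d = of_int j" by simp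
  show ?thesis using 1 2 ed unfolding dy_def by (metis Ints_of_int diff_Suc_1)
qed

lemma pow_le: "e \<le> p \<Longrightarrow> (1::real) / 2 ^ p \<le> 1 / 2 ^ e"
  by (simp add: frac_le power_increasing)
lemma pow_less: "f < e \<Longrightarrow> (1::real) / 2 ^ e < 1 / 2 ^ f"
  by (simp add: divide_strict_left_mono power_strict_increasing)

lemma canon_F_right:
  assumes C: "canon C c e" and ne: "\<not> (e = 0 \<and> c \<ge> 0)" and CR: "canon CR (c + 1 / 2 ^ e) f"
    and rl: "rl \<in> set (lopts CR)" and V: "canon rl v f'"
  shows "v < c"
proof -
  obtain g where g: "canon rl (c + 1 / 2 ^ e - 1 / 2 ^ f) g" and nf: "\<not> (f = 0 \<and> c + 1 / 2 ^ e \<le> 0)"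
    using canon_lopt[OF CR rl] by blast
  have v: "v = c + 1 / 2 ^ e - 1 / 2 ^ f" using canon_unique[OF V g] .
  have dc: "dy e c" using canon_dy[OF C] .
  show ?thesis
  proof (cases "e = 0")
    case True
    hence c0: "c < 0" using ne by simp
    have d0: "dy 0 (c + 1 / 2 ^ e)" using dy_plus[OF dc] True by simp
    have f0: "f = 0" using canon_min[OF CR d0] by simp
    obtain m where "c = of_int m" using dc True unfolding dy_def by (auto elim: Ints_cases)
    hence "c + 1 \<le> 0" using c0 by simp
    thus ?thesis using nf f0 True by simp
  next
    case False
    have "\<not> dy (e - 1) c" using canon_E[OF C] False by simp
    hence "dy (e - 1) (c + 1 / 2 ^ e)" using dy_odd[OF dc] False by simp
    hence "f \<le> e - 1" using canon_min[OF CR] by simp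
    hence "f < e" using False by simp
    thus ?thesis using v pow_less[of f e] by simp
  qed
qed

lemma canon_F_left:
  assumes C: "canon C c e" and ne: "\<not> (e = 0 \<and> c \<le> 0)" and CL: "canon CL (c - 1 / 2 ^ e) f"
    and rr: "rr \<in> set (ropts CL)" and V: "canon rr v f'"
  shows "v > c"
proof -
  obtain g where g: "canon rr (c - 1 / 2 ^ e + 1 / 2 ^ f) g" and nf: "\<not> (f = 0 \<and> c - 1 / 2 ^ e \<ge> 0)"
    using canon_ropt[OF CL rr] by blast
  have v: "v = c - 1 / 2 ^ e + 1 / 2 ^ f" using canon_unique[OF V g] .
  have dc: "dy e c" using canon_dy[OF C] .
  show ?thesis
  proof (cases "e = 0")
    case True
    hence c0: "c > 0" using ne by simp
    have d0: "dy 0 (c - 1 / 2 ^ e)" using dy_minus[OF dc] True by simp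
    have f0: "f = 0" using canon_min[OF CL d0] by simp
    obtain m where "c = of_int m" using dc True unfolding dy_def by (auto elim: Ints_cases)
    hence "c - 1 \<ge> 0" using c0 by simp
    thus ?thesis using nf f0 True by simp
  next
    case False
    have "\<not> dy (e - 1) c" using canon_E[OF C] False by simp
    hence "dy (e - 1) (c - 1 / 2 ^ e)" using dy_odd[OF dc] False by simp
    hence "f \<le> e - 1" using canon_min[OF CL] by simp
    hence "f < e" using False by simp
    thus ?thesis using v pow_less[of f e] by simp
  qed
qed

lemma rev_simp_right:
  assumes eq: "game_eq G CG" and CG: "canon CG g e" and ne: "\<not> (e = 0 \<and> g \<ge> 0)"
    and rb: "ropts G = [b]" and hb: "game_eq b Cb" and Cb: "canon Cb bv eb"
  shows "bv \<le> g + 1 / 2 ^ e"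
proof -
  obtain CR f where CRs: "ropts CG = [CR]" and CR: "canon CR (g + 1 / 2 ^ e) f"
    using canon_has_ropt[OF CG ne] by blast
  have "\<not> game_le CR G" using eq CRs unfolding game_eq_def by (subst (asm) game_le_iff) auto
  hence "(\<exists>rl\<in>set (lopts CR). game_le G rl) \<or> game_le b CR"
    using rb by (subst (asm) game_le_iff) auto
  thus ?thesis
  proof
    assume "\<exists>rl\<in>set (lopts CR). game_le G rl"
    then obtain rl where rl: "rl \<in> set (lopts CR)" "game_le G rl" by blast
    obtain v f' where V: "canon rl v f'" using canon_lopt[OF CR rl(1)] by blast
    have "v < g" using canon_F_right[OF CG ne CR rl(1) V] .
    moreover have "game_le CG rl" using game_le_trans[OF _ rl(2)] eq unfolding game_eq_def by blast
    hence "g \<le> v" using canon_le[OF CG V] by simp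
    ultimately show ?thesis by simp
  next
    assume "game_le b CR"
    hence "game_le Cb CR" using game_le_trans hb unfolding game_eq_def by blast
    thus ?thesis using canon_le[OF Cb CR] by simp
  qed
qed

lemma rev_simp_left:
  assumes eq: "game_eq G CG" and CG: "canon CG g e" and ne: "\<not> (e = 0 \<and> g \<le> 0)"
    and la: "lopts G = [a]" and ha: "game_eq a Ca" and Ca: "canon Ca av ea"
  shows "g - 1 / 2 ^ e \<le> av"
proof -
  obtain CL f where CLs: "lopts CG = [CL]" and CL: "canon CL (g - 1 / 2 ^ e) f"
    using canon_has_lopt[OF CG ne] by blast
  have "\<not> game_le G CL" using eq CLs unfolding game_eq_def by (subst (asm) game_le_iff[of CG]) auto
  hence "(\<exists>rr\<in>set (ropts CL). game_le rr G) \<or> game_le CL a"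
    using la by (subst (asm) game_le_iff) auto
  thus ?thesis
  proof
    assume "\<exists>rr\<in>set (ropts CL). game_le rr G"
    then obtain rr where rr: "rr \<in> set (ropts CL)" "game_le rr G" by blast
    obtain v f' where V: "canon rr v f'" using canon_ropt[OF CL rr(1)] by blast
    have "v > g" using canon_F_left[OF CG ne CL rr(1) V] .
    moreover have "game_le rr CG" using game_le_trans[OF rr(2)] eq unfolding game_eq_def by blast
    hence "v \<le> g" using canon_le[OF V CG] by simp
    ultimately show ?thesis by simp
  next
    assume "game_le CL a"
    hence "game_le CL Ca" using game_le_trans ha unfolding game_eq_def by blast
    thus ?thesis using canon_le[OF CL Ca] by simp
  qed
qed


lemma dyad_of_dy: "dy p c \<Longrightarrow> \<exists>C e. canon C c e \<and> e \<le> p"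
proof -
  assume d: "dy p c"
  obtain m where m: "c * 2 ^ p = of_int m" using d unfolding dy_def by (auto elim: Ints_cases)
  hence cv: "c = of_int m / 2 ^ p" by (simp add: field_simps)
  obtain e where "canon (dyad m p) (of_int m / 2 ^ p) e" using canon_dyad by blast
  hence "canon (dyad m p) c e" using cv by simp
  moreover have "e \<le> p" using canon_min[OF calculation d] .
  ultimately show ?thesis by blast
qed

lemma step_right:
  assumes Cx: "canon Cx x ex" and Hx: "game_eq H Cx" and Ca: "canon Ca av ea" and ha: "game_eq a Ca"
    and Cb: "canon Cb bv eb" and hb: "game_eq b Cb" and ax: "av < x" and dx: "dy p x"
    and lt: "1 / 2 ^ p < bv - x" and le: "bv - x \<le> 2 / 2 ^ p"
  shows "\<exists>C e. canon C (x + 1 / 2 ^ p) e \<and> game_eq (Game [a, H] [b]) C"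
proof -
  define c where "c = x + 1 / 2 ^ p"
  obtain C e where C: "canon C c e" and ep: "e \<le> p" using dyad_of_dy[OF dy_plus[OF dx]] unfolding c_def by blast
  have pp: "(0::real) < 1 / 2 ^ p" by simp
  have pe: "(1::real) / 2 ^ p \<le> 1 / 2 ^ e" using pow_le[OF ep] .
  define X where "X = Game [a, H] [b]"
  have "game_le X C"
  proof (subst game_le_iff, intro conjI ballI)
    fix z assume "z \<in> set (lopts X)"
    hence "z = a \<or> z = H" unfolding X_def by simp
    thus "\<not> game_le C z"
    proof
      assume z: "z = a"
      show ?thesis
      proof
        assume "game_le C z"
        hence "game_le C Ca" using z ha game_le_trans unfolding game_eq_def by blast
        hence "c \<le> av" using canon_le[OF C Ca] by simp
        thus False using ax pp unfolding c_def by simp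
      qed
    next
      assume z: "z = H"
      show ?thesis
      proof
        assume "game_le C z"
        hence "game_le C Cx" using z Hx game_le_trans unfolding game_eq_def by blast
        hence "c \<le> x" using canon_le[OF C Cx] by simp
        thus False unfolding c_def using pp by linarith
      qed
    qed
  next
    fix y assume y: "y \<in> set (ropts C)"
    obtain f where Y: "canon y (c + 1 / 2 ^ e) f" using canon_ropt[OF C y] by blast
    show "\<not> game_le y X"
    proof
      assume yX: "game_le y X"
      have "bv \<le> c + 1 / 2 ^ e" using le pe unfolding c_def by simp
      hence "game_le Cb y" using canon_le[OF Cb Y] by simp
      hence "game_le b X" using hb yX game_le_trans unfolding game_eq_def by blast
      moreover have "b \<in> set (ropts X)" unfolding X_def by simp
      ultimately show False using not_le_ropt by blast
    qed
  qed
  moreover have "game_le C X"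
  proof (subst game_le_iff, intro conjI ballI)
    fix z assume z: "z \<in> set (lopts C)"
    obtain f where Z: "canon z (c - 1 / 2 ^ e) f" using canon_lopt[OF C z] by blast
    show "\<not> game_le X z"
    proof
      assume Xz: "game_le X z"
      have "c - 1 / 2 ^ e \<le> x" using pe unfolding c_def by simp
      hence "game_le z Cx" using canon_le[OF Z Cx] by simp
      hence "game_le X H" using Hx Xz game_le_trans unfolding game_eq_def by blast
      moreover have "H \<in> set (lopts X)" unfolding X_def by simp
      ultimately show False using not_le_lopt by blast
    qed
  next
    fix y assume "y \<in> set (ropts X)"
    hence y: "y = b" unfolding X_def by simp
    show "\<not> game_le y C"
    proof
      assume "game_le y C"
      hence "game_le Cb C" using y hb game_le_trans unfolding game_eq_def by blast
      hence "bv \<le> c" using canon_le[OF Cb C] by simp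
      thus False using lt unfolding c_def by simp
    qed
  qed
  ultimately show ?thesis using C unfolding X_def c_def game_eq_def by blast
qed

lemma step_left:
  assumes Cx: "canon Cx x ex" and Hx: "game_eq H Cx" and Ca: "canon Ca av ea" and ha: "game_eq a Ca"
    and Cb: "canon Cb bv eb" and hb: "game_eq b Cb" and xb: "x < bv" and dx: "dy p x"
    and lt: "1 / 2 ^ p < x - av" and le: "x - av \<le> 2 / 2 ^ p"
  shows "\<exists>C e. canon C (x - 1 / 2 ^ p) e \<and> game_eq (Game [a] [b, H]) C"
proof -
  define c where "c = x - 1 / 2 ^ p"
  obtain C e where C: "canon C c e" and ep: "e \<le> p" using dyad_of_dy[OF dy_minus[OF dx]] unfolding c_def by blast
  have pp: "(0::real) < 1 / 2 ^ p" by simp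
  have pe: "(1::real) / 2 ^ p \<le> 1 / 2 ^ e" using pow_le[OF ep] .
  define X where "X = Game [a] [b, H]"
  have "game_le X C"
  proof (subst game_le_iff, intro conjI ballI)
    fix z assume "z \<in> set (lopts X)"
    hence z: "z = a" unfolding X_def by simp
    show "\<not> game_le C z"
    proof
      assume "game_le C z"
      hence "game_le C Ca" using z ha game_le_trans unfolding game_eq_def by blast
      hence "c \<le> av" using canon_le[OF C Ca] by simp
      thus False using lt unfolding c_def by simp
    qed
  next
    fix y assume y: "y \<in> set (ropts C)"
    obtain f where Y: "canon y (c + 1 / 2 ^ e) f" using canon_ropt[OF C y] by blast
    show "\<not> game_le y X"
    proof
      assume yX: "game_le y X"
      have "x \<le> c + 1 / 2 ^ e" using pe unfolding c_def by simp
      hence "game_le Cx y" using canon_le[OF Cx Y] by simp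
      hence "game_le H X" using Hx yX game_le_trans unfolding game_eq_def by blast
      moreover have "H \<in> set (ropts X)" unfolding X_def by simp
      ultimately show False using not_le_ropt by blast
    qed
  qed
  moreover have "game_le C X"
  proof (subst game_le_iff, intro conjI ballI)
    fix z assume z: "z \<in> set (lopts C)"
    obtain f where Z: "canon z (c - 1 / 2 ^ e) f" using canon_lopt[OF C z] by blast
    show "\<not> game_le X z"
    proof
      assume Xz: "game_le X z"
      have "c - 1 / 2 ^ e \<le> av" using pe le unfolding c_def by simp
      hence "game_le z Ca" using canon_le[OF Z Ca] by simp
      hence "game_le X a" using ha Xz game_le_trans unfolding game_eq_def by blast
      moreover have "a \<in> set (lopts X)" unfolding X_def by simp
      ultimately show False using not_le_lopt by blast
    qed
  next
    fix y assume "y \<in> set (ropts X)"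
    hence "y = b \<or> y = H" unfolding X_def by simp
    thus "\<not> game_le y C"
    proof
      assume y: "y = b"
      show ?thesis
      proof
        assume "game_le y C"
        hence "game_le Cb C" using y hb game_le_trans unfolding game_eq_def by blast
        hence "bv \<le> c" using canon_le[OF Cb C] by simp
        thus False using xb pp unfolding c_def by simp
      qed
    next
      assume y: "y = H"
      show ?thesis
      proof
        assume "game_le y C"
        hence "game_le Cx C" using y Hx game_le_trans unfolding game_eq_def by blast
        hence "x \<le> c" using canon_le[OF Cx C] by simp
        thus False unfolding c_def using pp by linarith
      qed
    qed
  qed
  ultimately show ?thesis using C unfolding X_def c_def game_eq_def by blast
qed


lemma powr_nat: "0 \<le> z \<Longrightarrow> (2::real) powr (- real_of_int z) = 1 / 2 ^ nat z"
proof -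
  assume "0 \<le> z"
  hence z: "real_of_int z = real (nat z)" by simp
  have "(2::real) powr (- real_of_int z) = inverse (2 powr real_of_int z)" by (rule powr_minus)
  also have "2 powr real_of_int z = (2::real) powr real (nat z)" by (simp only: z)
  also have "\<dots> = 2 ^ nat z" by (rule powr_realpow) simp
  finally show ?thesis by (simp add: divide_inverse)
qed

lemma pow_cancel: "(1::real) / 2 ^ q < 1 / 2 ^ p \<Longrightarrow> p < q"
  using pow_le[of q p] by linarith

lemma ordsum_pos_Suc: "ordsum (Game [a] [b]) (pos_game (Suc j)) = Game [a, ordsum (Game [a] [b]) (pos_game j)] [b]"
  by simp
lemma ordsum_neg_Suc: "ordsum (Game [a] [b]) (neg_game (Suc j)) = Game [a] [b, ordsum (Game [a] [b]) (neg_game j)]"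
  by simp
lemma ordsum_zero: "ordsum (Game [a] [b]) (pos_game 0) = Game [a] [b]" "ordsum (Game [a] [b]) (neg_game 0) = Game [a] [b]"
  by simp_all

lemma av_lt_gv:
  assumes G: "G = Game [a] [b]" and hG: "has_value G gv" and ha: "has_value a av" and hb: "has_value b bv"
  shows "av < gv \<and> gv < bv"
proof -
  obtain CG eG where CG: "canon CG gv eG" "game_eq G CG" using has_value_canon[OF hG] by blast
  obtain Ca ea where Ca: "canon Ca av ea" "game_eq a Ca" using has_value_canon[OF ha] by blast
  obtain Cb eb where Cb: "canon Cb bv eb" "game_eq b Cb" using has_value_canon[OF hb] by blast
  have "\<not> game_le G a" using not_le_lopt[of a G] G by simp
  hence "\<not> game_le CG Ca" using CG(2) Ca(2) game_le_trans unfolding game_eq_def by blast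
  hence 1: "av < gv" using canon_le[OF CG(1) Ca(1)] by simp
  have "\<not> game_le b G" using not_le_ropt[of b G] G by simp
  hence "\<not> game_le Cb CG" using CG(2) Cb(2) game_le_trans unfolding game_eq_def by blast
  hence "gv < bv" using canon_le[OF Cb(1) CG(1)] by simp
  with 1 show ?thesis by simp
qed

lemma part_right:
  fixes \<alpha> :: "nat \<Rightarrow> int"
  assumes G: "G = Game [a] [b]" and hG: "has_value G gv" and ha: "has_value a av" and hb: "has_value b bv"
    and H: "\<forall>i\<in>{1..k}.
             0 < \<alpha> i \<and>
             2 powr (- real_of_int (\<alpha> i)) < bv - gv - (\<Sum>j=1..<i. 2 powr (- real_of_int (\<alpha> j))) \<and>
             (\<forall>n::int. 2 powr (- real_of_int n) < bv - gv - (\<Sum>j=1..<i. 2 powr (- real_of_int (\<alpha> j)))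
                 \<longrightarrow> \<alpha> i \<le> n)"
  shows "has_value (ordsum G (int_game (int k))) (gv + (\<Sum>i=1..k. 2 powr (- real_of_int (\<alpha> i))))"
proof -
  define S where "S j = (\<Sum>i=1..j. 2 powr (- real_of_int (\<alpha> i)))" for j
  define p where "p i = nat (\<alpha> i)" for i
  have T: "2 powr (- real_of_int (\<alpha> i)) = 1 / 2 ^ p i" if "i \<in> {1..k}" for i
    using powr_nat[of "\<alpha> i"] H that unfolding p_def by force
  have Sn: "(\<Sum>j=1..<Suc j. 2 powr (- real_of_int (\<alpha> j))) = S j" for j
    unfolding S_def by (simp add: atLeastLessThanSuc_atLeastAtMost)
  have SS: "S (Suc j) = S j + 2 powr (- real_of_int (\<alpha> (Suc j)))" for j
    unfolding S_def by simp
  have S0: "S j \<ge> 0" for j unfolding S_def by (simp add: sum_nonneg)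
  have lt: "1 / 2 ^ p (Suc j) < bv - (gv + S j)" if "Suc j \<le> k" for j
    using H[rule_format, of "Suc j"] T[of "Suc j"] that Sn[of j] by simp
  have le: "bv - (gv + S j) \<le> 2 / 2 ^ p (Suc j)" if "Suc j \<le> k" for j
  proof -
    have m: "\<forall>n::int. 2 powr (- real_of_int n) < bv - gv - S j \<longrightarrow> \<alpha> (Suc j) \<le> n"
      using H[rule_format, of "Suc j"] that Sn[of j] by simp
    have "\<not> 2 powr (- real_of_int (\<alpha> (Suc j) - 1)) < bv - gv - S j"
      using m[rule_format, of "\<alpha> (Suc j) - 1"] by linarith
    moreover have "(2::real) powr (- real_of_int (\<alpha> (Suc j) - 1)) = 2 * 2 powr (- real_of_int (\<alpha> (Suc j)))"
    proof -
      have "(2::real) powr (- real_of_int (\<alpha> (Suc j) - 1)) = 2 powr (1 + - real_of_int (\<alpha> (Suc j)))" by simp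
      also have "\<dots> = 2 powr 1 * 2 powr (- real_of_int (\<alpha> (Suc j)))" by (rule powr_add)
      finally show ?thesis by simp
    qed
    ultimately show ?thesis using T[of "Suc j"] that by simp
  qed
  obtain CG eG where CG: "canon CG gv eG" "game_eq G CG" using has_value_canon[OF hG] by blast
  obtain Ca ea where Ca: "canon Ca av ea" "game_eq a Ca" using has_value_canon[OF ha] by blast
  obtain Cb eb where Cb: "canon Cb bv eb" "game_eq b Cb" using has_value_canon[OF hb] by blast
  have avg: "av < gv" using av_lt_gv[OF G hG ha hb] by simp
  have main: "j \<le> k \<Longrightarrow> \<exists>C e. canon C (gv + S j) e \<and> game_eq (ordsum G (pos_game j)) C \<and>
                 (j < k \<longrightarrow> dy (p (Suc j)) (gv + S j))" for j
  proof (induction j)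
    case 0
    have "dy (p 1) gv" if "0 < k"
    proof -
      have "eG \<le> p 1"
      proof (cases "eG = 0 \<and> gv \<ge> 0")
        case True thus ?thesis by simp
      next
        case False
        have "bv \<le> gv + 1 / 2 ^ eG" using rev_simp_right[OF CG(2) CG(1) False _ Cb(2) Cb(1)] G by simp
        moreover have "1 / 2 ^ p 1 < bv - gv" using lt[of 0] that by (simp add: S_def)
        ultimately have "(1::real) / 2 ^ p 1 < 1 / 2 ^ eG" by simp
        thus ?thesis using pow_cancel by fastforce
      qed
      thus ?thesis using dy_mono[OF canon_dy[OF CG(1)]] by simp
    qed
    thus ?case using CG G by (auto simp: S_def)
  next
    case (Suc j)
    then obtain Cx ex where IH: "canon Cx (gv + S j) ex" "game_eq (ordsum G (pos_game j)) Cx"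
       "dy (p (Suc j)) (gv + S j)" by auto
    have "av < gv + S j" using avg S0[of j] by simp
    from step_right[OF IH(1) IH(2) Ca(1) Ca(2) Cb(1) Cb(2) this IH(3) lt[OF Suc.prems] le[OF Suc.prems]]
    obtain C e where C: "canon C (gv + S j + 1 / 2 ^ p (Suc j)) e"
       "game_eq (Game [a, ordsum G (pos_game j)] [b]) C" by blast
    have val: "gv + S (Suc j) = gv + S j + 1 / 2 ^ p (Suc j)" using SS[of j] T[of "Suc j"] Suc.prems by simp
    have o: "ordsum G (pos_game (Suc j)) = Game [a, ordsum G (pos_game j)] [b]" using G by simp
    have dyn: "dy (p (Suc (Suc j))) (gv + S (Suc j))" if "Suc j < k"
    proof -
      have "1 / 2 ^ p (Suc (Suc j)) < bv - (gv + S (Suc j))" using lt[of "Suc j"] that by simp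
      also have "\<dots> \<le> 1 / 2 ^ p (Suc j)" using le[OF Suc.prems] val by simp
      finally have "p (Suc j) \<le> p (Suc (Suc j))" using pow_cancel by fastforce
      moreover have "dy (p (Suc j)) (gv + S (Suc j))" using dy_plus[OF IH(3)] by (simp only: val)
      ultimately show ?thesis using dy_mono by blast
    qed
    have "\<exists>C e. canon C (gv + S (Suc j)) e \<and> game_eq (ordsum G (pos_game (Suc j))) C"
      using C unfolding val o by blast
    thus ?case using dyn by blast
  qed
  obtain C e where "canon C (gv + S k) e" "game_eq (ordsum G (pos_game k)) C" using main[of k] by auto
  hence "has_value (ordsum G (pos_game k)) (gv + S k)" using canon_has_value by blast
  moreover have "int_game (int k) = pos_game k" by (simp add: int_game_def)
  ultimately show ?thesis unfolding S_def by metis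
qed


lemma part_left:
  fixes \<beta> :: "nat \<Rightarrow> int"
  assumes G: "G = Game [a] [b]" and hG: "has_value G gv" and ha: "has_value a av" and hb: "has_value b bv"
    and r1: "gv - av \<le> 1"
    and H: "\<forall>i\<in>{1..k}.
             2 powr (- real_of_int (\<beta> i)) < gv - av - (\<Sum>j=1..<i. 2 powr (- real_of_int (\<beta> j))) \<and>
             (\<forall>n::int. 2 powr (- real_of_int n) < gv - av - (\<Sum>j=1..<i. 2 powr (- real_of_int (\<beta> j)))
                 \<longrightarrow> \<beta> i \<le> n)"
  shows "has_value (ordsum G (int_game (- int k))) (gv - (\<Sum>i=1..k. 2 powr (- real_of_int (\<beta> i))))"
proof -
  define S where "S j = (\<Sum>i=1..j. 2 powr (- real_of_int (\<beta> i)))" for j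
  define p where "p i = nat (\<beta> i)" for i
  have Sn: "(\<Sum>j=1..<Suc j. 2 powr (- real_of_int (\<beta> j))) = S j" for j
    unfolding S_def by (simp add: atLeastLessThanSuc_atLeastAtMost)
  have SS: "S (Suc j) = S j + 2 powr (- real_of_int (\<beta> (Suc j)))" for j
    unfolding S_def by simp
  have S0: "S j \<ge> 0" for j unfolding S_def by (simp add: sum_nonneg)
  have bpos: "0 \<le> \<beta> i" if iin: "i \<in> {1..k}" for i
  proof (rule ccontr)
    assume "\<not> 0 \<le> \<beta> i"
    hence "(1::real) \<le> 2 powr (- real_of_int (\<beta> i))" by (intro ge_one_powr_ge_zero) auto
    moreover obtain j where j: "i = Suc j" using iin by (cases i) auto
    moreover have "2 powr (- real_of_int (\<beta> i)) < gv - av - S j" using H[rule_format, OF iin] Sn[of j] j by simp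
    ultimately show False using S0[of j] r1 by linarith
  qed
  have T: "2 powr (- real_of_int (\<beta> i)) = 1 / 2 ^ p i" if "i \<in> {1..k}" for i
    using powr_nat[of "\<beta> i"] bpos[OF that] unfolding p_def by force
  have lt: "1 / 2 ^ p (Suc j) < (gv - S j) - av" if "Suc j \<le> k" for j
    using H[rule_format, of "Suc j"] T[of "Suc j"] that Sn[of j] by simp
  have le: "(gv - S j) - av \<le> 2 / 2 ^ p (Suc j)" if "Suc j \<le> k" for j
  proof -
    have m: "\<forall>n::int. 2 powr (- real_of_int n) < gv - av - S j \<longrightarrow> \<beta> (Suc j) \<le> n"
      using H[rule_format, of "Suc j"] that Sn[of j] by simp
    have "\<not> 2 powr (- real_of_int (\<beta> (Suc j) - 1)) < gv - av - S j"
      using m[rule_format, of "\<beta> (Suc j) - 1"] by linarith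
    moreover have "(2::real) powr (- real_of_int (\<beta> (Suc j) - 1)) = 2 * 2 powr (- real_of_int (\<beta> (Suc j)))"
    proof -
      have "(2::real) powr (- real_of_int (\<beta> (Suc j) - 1)) = 2 powr (1 + - real_of_int (\<beta> (Suc j)))" by simp
      also have "\<dots> = 2 powr 1 * 2 powr (- real_of_int (\<beta> (Suc j)))" by (rule powr_add)
      finally show ?thesis by simp
    qed
    ultimately show ?thesis using T[of "Suc j"] that by simp
  qed
  obtain CG eG where CG: "canon CG gv eG" "game_eq G CG" using has_value_canon[OF hG] by blast
  obtain Ca ea where Ca: "canon Ca av ea" "game_eq a Ca" using has_value_canon[OF ha] by blast
  obtain Cb eb where Cb: "canon Cb bv eb" "game_eq b Cb" using has_value_canon[OF hb] by blast
  have gvb: "gv < bv" using av_lt_gv[OF G hG ha hb] by simp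
  have main: "j \<le> k \<Longrightarrow> \<exists>C e. canon C (gv - S j) e \<and> game_eq (ordsum G (neg_game j)) C \<and>
                 (j < k \<longrightarrow> dy (p (Suc j)) (gv - S j))" for j
  proof (induction j)
    case 0
    have "dy (p 1) gv" if "0 < k"
    proof -
      have "eG \<le> p 1"
      proof (cases "eG = 0 \<and> gv \<le> 0")
        case True thus ?thesis by simp
      next
        case False
        have "gv - 1 / 2 ^ eG \<le> av" using rev_simp_left[OF CG(2) CG(1) False _ Ca(2) Ca(1)] G by simp
        moreover have "1 / 2 ^ p 1 < gv - av" using lt[of 0] that by (simp add: S_def)
        ultimately have "(1::real) / 2 ^ p 1 < 1 / 2 ^ eG" by simp
        thus ?thesis using pow_cancel by fastforce
      qed
      thus ?thesis using dy_mono[OF canon_dy[OF CG(1)]] by simp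
    qed
    thus ?case using CG G by (auto simp: S_def)
  next
    case (Suc j)
    then obtain Cx ex where IH: "canon Cx (gv - S j) ex" "game_eq (ordsum G (neg_game j)) Cx"
       "dy (p (Suc j)) (gv - S j)" by auto
    have "gv - S j < bv" using gvb S0[of j] by simp
    from step_left[OF IH(1) IH(2) Ca(1) Ca(2) Cb(1) Cb(2) this IH(3) lt[OF Suc.prems] le[OF Suc.prems]]
    obtain C e where C: "canon C (gv - S j - 1 / 2 ^ p (Suc j)) e"
       "game_eq (Game [a] [b, ordsum G (neg_game j)]) C" by blast
    have val: "gv - S (Suc j) = gv - S j - 1 / 2 ^ p (Suc j)" using SS[of j] T[of "Suc j"] Suc.prems by simp
    have o: "ordsum G (neg_game (Suc j)) = Game [a] [b, ordsum G (neg_game j)]" using G by simp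
    have dyn: "dy (p (Suc (Suc j))) (gv - S (Suc j))" if "Suc j < k"
    proof -
      have "1 / 2 ^ p (Suc (Suc j)) < (gv - S (Suc j)) - av" using lt[of "Suc j"] that by simp
      also have "\<dots> \<le> 1 / 2 ^ p (Suc j)" using le[OF Suc.prems] val by simp
      finally have "p (Suc j) \<le> p (Suc (Suc j))" using pow_cancel by fastforce
      moreover have "dy (p (Suc j)) (gv - S (Suc j))" using dy_minus[OF IH(3)] by (simp only: val)
      ultimately show ?thesis using dy_mono by blast
    qed
    have "\<exists>C e. canon C (gv - S (Suc j)) e \<and> game_eq (ordsum G (neg_game (Suc j))) C"
      using C unfolding val o by blast
    thus ?case using dyn by blast
  qed
  obtain C e where "canon C (gv - S k) e" "game_eq (ordsum G (neg_game k)) C" using main[of k] by auto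
  hence "has_value (ordsum G (neg_game k)) (gv - S k)" using canon_has_value by blast
  moreover have "int_game (- int k) = neg_game k" by (simp add: int_game_def)
  ultimately show ?thesis unfolding S_def by metis
qed

theorem theorem4p2:
  fixes a b G :: game and k :: nat and av bv gv :: real and \<alpha> \<beta> :: "nat \<Rightarrow> int"
  assumes "k > 0"
    and "is_number a" and "is_number b" and "is_number G"
    and "G = Game [a] [b]"
    and "has_value G gv" and "has_value a av" and "has_value b bv"
  shows "(bv - gv \<le> 1 \<and>
          (\<forall>i\<in>{1..k}.
             0 < \<alpha> i \<and>
             2 powr (- real_of_int (\<alpha> i)) < bv - gv - (\<Sum>j=1..<i. 2 powr (- real_of_int (\<alpha> j))) \<and>
             (\<forall>n::int. 2 powr (- real_of_int n) < bv - gv - (\<Sum>j=1..<i. 2 powr (- real_of_int (\<alpha> j)))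
                 \<longrightarrow> \<alpha> i \<le> n))
         \<longrightarrow> has_value (ordsum G (int_game (int k))) (gv + (\<Sum>i=1..k. 2 powr (- real_of_int (\<alpha> i)))))
       \<and>
         (gv - av \<le> 1 \<and>
          (\<forall>i\<in>{1..k}.
             2 powr (- real_of_int (\<beta> i)) < gv - av - (\<Sum>j=1..<i. 2 powr (- real_of_int (\<beta> j))) \<and>
             (\<forall>n::int. 2 powr (- real_of_int n) < gv - av - (\<Sum>j=1..<i. 2 powr (- real_of_int (\<beta> j)))
                 \<longrightarrow> \<beta> i \<le> n))
         \<longrightarrow> has_value (ordsum G (int_game (- int k))) (gv - (\<Sum>i=1..k. 2 powr (- real_of_int (\<beta> i)))))"
proof (intro conjI impI)
  assume h: "bv - gv \<le> 1 \<and>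
          (\<forall>i\<in>{1..k}.
             0 < \<alpha> i \<and>
             2 powr (- real_of_int (\<alpha> i)) < bv - gv - (\<Sum>j=1..<i. 2 powr (- real_of_int (\<alpha> j))) \<and>
             (\<forall>n::int. 2 powr (- real_of_int n) < bv - gv - (\<Sum>j=1..<i. 2 powr (- real_of_int (\<alpha> j)))
                 \<longrightarrow> \<alpha> i \<le> n))"
  show "has_value (ordsum G (int_game (int k))) (gv + (\<Sum>i=1..k. 2 powr (- real_of_int (\<alpha> i))))"
    using part_right[OF assms(5-8)] h by blast
next
  assume h: "gv - av \<le> 1 \<and>
          (\<forall>i\<in>{1..k}.
             2 powr (- real_of_int (\<beta> i)) < gv - av - (\<Sum>j=1..<i. 2 powr (- real_of_int (\<beta> j))) \<and>
             (\<forall>n::int. 2 powr (- real_of_int n) < gv - av - (\<Sum>j=1..<i. 2 powr (- real_of_int (\<beta> j)))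
                 \<longrightarrow> \<beta> i \<le> n))"
  show "has_value (ordsum G (int_game (- int k))) (gv - (\<Sum>i=1..k. 2 powr (- real_of_int (\<beta> i))))"
    using part_left[OF assms(5-8)] h by blast
qed

end
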